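(* Consider the general LPP model described in the context, fix $\eta_0\in(0,\infty)$, $u\in\mathbb{R}$, set $\eta=\eta_0+ut^{-2/3}$, and suppose Assumptions A1 and A2 hold. Let $D$ be a probability distribution. If, as $t\to\infty$, $$\frac{L_{\mathcal{L}^-\to(\eta t,t)}-\mu t}{t^{1/3}}-\frac{L_{\mathcal{L}^+\to E^+}+L_{E^+\to(\eta t,t)}-\mu t}{t^{1/3}}\Rightarrow D,$$ then $$\frac{L_{\mathcal{L}^-\to(\eta t,t)}-\mu t}{t^{1/3}}-\frac{L_{\mathcal{L}^+\to(\eta t,t)}-\mu t}{t^{1/3}}\Rightarrow D.$$
   Context: LPP: for independent nonnegative $\{\omega_{i,j}\}$, an up-right path is a sequence of points of $\mathbb{Z}^2$ with increments in $\{(1,0),(0,1)\}$; $L_{S_A\to S_E}=\max_\pi\sum_{(i,j)\in\pi\setminus S_A}\omega_{i,j}$ over up-right paths from $S_A$ to $S_E$ ($-\infty$ if none); for points $A,B$ write $L_{A\to B}$; non-integer coordinates are understood as integer parts. General model: integers $x_k(0)$, $k\in\mathbb{Z}$, with $x_{k+1}(0)<x_k(0)$, $x_0(0)=1$, $x_1(0)<-1$; $\omega_{i,j}$ independent exponential with rate $v_j>0$; $\mathcal{L}^+=\{(k+x_k(0),k):k>0\}$, $\mathcal{L}^-=\{(k+x_k(0),k):k\le0\}$. Assumption A1: there exist $\mu\in\mathbb{R}$ and continuous distribution functions $G_1(\cdot;u),G_2(\cdot;u)$ with $\lim_{t\to\infty}\mathbb{P}((L_{\mathcal{L}^+\to(\eta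 t,t)}-\mu t)/t^{1/3}\le s)=G_1(s;u)$ and $\lim_{t\to\infty}\mathbb{P}((L_{\mathcal{L}^-\to(\eta t,t)}-\mu t)/t^{1/3}\le s)=G_2(s;u)$ for all $s$. Assumption A2: there exist $\kappa,\mu_0\in\mathbb{R}$, $\nu\in(1/3,1)$ and a continuous distribution function $G_0(\cdot;u)$ such that, with $E^+=(\eta t-\kappa t^\nu,t-t^\nu)$, for all $s$: $\lim_{t\to\infty}\mathbb{P}((L_{E^+\to(\eta t,t)}-\mu_0t^\nu)/t^{\nu/3}\le s)=G_0(s;u)$ and $\lim_{t\to\infty}\mathbb{P}((L_{\mathcal{L}^+\to E^+}-\mu t+\mu_0t^\nu)/t^{1/3}\le s)=G_1(s;u)$. "$\Rightarrow$" denotes convergence in distribution. *)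

theory Defs
  imports "HOL-Probability.Probability"
begin

definition up_right_path :: "(int \<times> int) list \<Rightarrow> bool" where
  "up_right_path p \<longleftrightarrow> p \<noteq> [] \<and>
     (\<forall>i. Suc i < length p \<longrightarrow>
        p ! Suc i = (fst (p ! i) + 1, snd (p ! i)) \<or>
        p ! Suc i = (fst (p ! i), snd (p ! i) + 1))"

text \<open>Last passage time from the set SA to the set SE:
  maximum over up-right paths from SA to SE of the sum of weights over the
  points of the path not lying in SA; equal to -infinity if no such path exists
  (supremum of the empty set in ereal).\<close>
definition LPP :: "(int \<times> int \<Rightarrow> real) \<Rightarrow> (int \<times> int) set \<Rightarrow> (int \<times> int) set \<Rightarrow> ereal" where
  "LPP w SA SE = (SUP p \<in> {p. up_right_path p \<and> hd p \<in> SA \<and> last p \<in> SE}.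
        ereal (\<Sum>q \<in> set p - SA. w q))"

definition Lplus :: "(int \<Rightarrow> int) \<Rightarrow> (int \<times> int) set" where
  "Lplus x = {(k + x k, k) | k. k > 0}"

definition Lminus :: "(int \<Rightarrow> int) \<Rightarrow> (int \<times> int) set" where
  "Lminus x = {(k + x k, k) | k. k \<le> 0}"

definition ipt :: "real \<Rightarrow> real \<Rightarrow> int \<times> int" where
  "ipt a b = (\<lfloor>a\<rfloor>, \<lfloor>b\<rfloor>)"

definition cont_distr_fun :: "(real \<Rightarrow> real) \<Rightarrow> bool" where
  "cont_distr_fun G \<longleftrightarrow> continuous_on UNIV G \<and> mono G \<and>
     (G \<longlongrightarrow> 0) at_bot \<and> (G \<longlongrightarrow> 1) at_top"

definition conv_distr :: "'a measure \<Rightarrow> (real \<Rightarrow> 'a \<Rightarrow> ereal) \<Rightarrow> real measure \<Rightarrow> bool" where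
  "conv_distr M X D \<longleftrightarrow>
     (\<forall>s. isCont (cdf D) s \<longrightarrow>
        ((\<lambda>t. measure M {\<omega> \<in> space M. X t \<omega> \<le> ereal s}) \<longlongrightarrow> cdf D s) at_top)"

end

theory Submission
  imports Defs
begin


context prob_space begin

lemma transfer_tendsto:
  assumes S: "\<And>t. S t \<in> events" and T: "\<And>t. T t \<in> events" and N: "\<And>t. N t \<in> events"
    and N0: "((\<lambda>t. prob (N t)) \<longlongrightarrow> 0) F"
    and ev: "eventually (\<lambda>t. \<forall>\<xi>\<in>space M - N t. \<xi> \<in> S t \<longleftrightarrow> \<xi> \<in> T t) F"
    and lim: "((\<lambda>t. prob (S t)) \<longlongrightarrow> L) F"
  shows "((\<lambda>t. prob (T t)) \<longlongrightarrow> L) F"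
proof (rule tendsto_sandwich[of "\<lambda>t. prob (S t) - prob (N t)" _ _ "\<lambda>t. prob (S t) + prob (N t)"])
  show "\<forall>\<^sub>F t in F. prob (S t) - prob (N t) \<le> prob (T t)"
    using ev
  proof eventually_elim
    case (elim t)
    have "S t \<subseteq> T t \<union> N t" using elim sets.sets_into_space[OF S] by blast
    then have "prob (S t) \<le> prob (T t \<union> N t)" by (intro finite_measure_mono) (use T N in auto)
    also have "\<dots> \<le> prob (T t) + prob (N t)" by (rule measure_Un_le) (use T N in auto)
    finally show ?case by simp
  qed
  show "\<forall>\<^sub>F t in F. prob (T t) \<le> prob (S t) + prob (N t)"
    using ev
  proof eventually_elim
    case (elim t)
    have "T t \<subseteq> S t \<union> N t" using elim sets.sets_into_space[OF T] by blast
    then have "prob (T t) \<le> prob (S t \<union> N t)" by (intro finite_measure_mono) (use S N in auto)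
    also have "\<dots> \<le> prob (S t) + prob (N t)" by (rule measure_Un_le) (use S N in auto)
    finally show ?case by simp
  qed
  show "((\<lambda>t. prob (S t) - prob (N t)) \<longlongrightarrow> L) F" using tendsto_diff[OF lim N0] by simp
  show "((\<lambda>t. prob (S t) + prob (N t)) \<longlongrightarrow> L) F" using tendsto_add[OF lim N0] by simp
qed

lemma cdf_tails:
  assumes G: "cont_distr_fun G" and d: "d > 0"
  shows "\<exists>a. G a < d" "\<exists>b. G b > 1 - d"
proof -
  have "(G \<longlongrightarrow> 0) at_bot" "(G \<longlongrightarrow> 1) at_top" using G by (auto simp: cont_distr_fun_def)
  from order_tendstoD(2)[OF this(1), of d] d have "eventually (\<lambda>x. G x < d) at_bot" by simp
  then show "\<exists>a. G a < d" by (auto simp: eventually_at_bot_linorder)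
  from order_tendstoD(1)[OF \<open>(G \<longlongrightarrow> 1) at_top\<close>, of "1 - d"] d
  have "eventually (\<lambda>x. G x > 1 - d) at_top" by simp
  then show "\<exists>b. G b > 1 - d" by (auto simp: eventually_at_top_linorder)
qed

lemma infinite_negligible:
  fixes f :: "real \<Rightarrow> 'a \<Rightarrow> ereal"
  assumes meas: "\<And>t. f t \<in> borel_measurable M" and G: "cont_distr_fun G"
    and lim: "\<And>s. ((\<lambda>t. prob {\<xi> \<in> space M. f t \<xi> \<le> ereal s}) \<longlongrightarrow> G s) F"
  shows "((\<lambda>t. prob {\<xi> \<in> space M. \<bar>f t \<xi>\<bar> = \<infinity>}) \<longlongrightarrow> 0) F"
proof (rule order_tendstoI)
  fix y :: real assume "y < 0"
  then show "\<forall>\<^sub>F t in F. y < prob {\<xi> \<in> space M. \<bar>f t \<xi>\<bar> = \<infinity>}"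
    by (intro always_eventually) (auto intro: less_le_trans[OF _ measure_nonneg])
next
  fix y :: real assume "0 < y"
  then have y3: "y/4 > 0" by simp
  obtain a where a: "G a < y/4" using cdf_tails[OF G y3] by auto
  obtain b where b: "G b > 1 - y/4" using cdf_tails[OF G y3] by auto
  have e1: "eventually (\<lambda>t. prob {\<xi> \<in> space M. f t \<xi> \<le> ereal a} < y/4 + y/4) F"
    using order_tendstoD(2)[OF lim[of a], of "y/4 + y/4"] a y3 by linarith
  have e2: "eventually (\<lambda>t. prob {\<xi> \<in> space M. f t \<xi> \<le> ereal b} > 1 - y/4 - y/4) F"
    using order_tendstoD(1)[OF lim[of b], of "1 - y/4 - y/4"] b y3 by linarith
  show "\<forall>\<^sub>F t in F. prob {\<xi> \<in> space M. \<bar>f t \<xi>\<bar> = \<infinity>} < y"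
    using e1 e2
  proof eventually_elim
    case (elim t)
    let ?A = "{\<xi> \<in> space M. f t \<xi> \<le> ereal a}" and ?B = "{\<xi> \<in> space M. f t \<xi> \<le> ereal b}"
    have mA: "?A \<in> events" and mB: "?B \<in> events" using meas[of t] by measurable
    have "{\<xi> \<in> space M. \<bar>f t \<xi>\<bar> = \<infinity>} \<subseteq> ?A \<union> (space M - ?B)"
      by auto
    then have "prob {\<xi> \<in> space M. \<bar>f t \<xi>\<bar> = \<infinity>} \<le> prob (?A \<union> (space M - ?B))"
      by (intro finite_measure_mono) (use mA mB in auto)
    also have "\<dots> \<le> prob ?A + prob (space M - ?B)" by (rule measure_Un_le) (use mA mB in auto)
    also have "\<dots> = prob ?A + 1 - prob ?B" using prob_compl[OF mB] by simp
    finally show ?case using elim by simp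
  qed
qed

lemma cont_distr_isCont: "cont_distr_fun G \<Longrightarrow> isCont G a"
  by (auto simp: cont_distr_fun_def continuous_on_eq_continuous_at)

lemma cont_distr_mono: "cont_distr_fun G \<Longrightarrow> a \<le> b \<Longrightarrow> G a \<le> G b"
  by (auto simp: cont_distr_fun_def mono_def)

lemma cont_near:
  assumes G: "cont_distr_fun G" and e: "e > 0"
  shows "\<exists>\<eta>>0. \<bar>G (a + \<eta>) - G a\<bar> < e \<and> \<bar>G (a - \<eta>) - G a\<bar> < e"
proof -
  from cont_distr_isCont[OF G, of a] e obtain d where d: "d > 0"
    "\<And>x'. dist x' a < d \<Longrightarrow> dist (G x') (G a) < e"
    unfolding continuous_at_eps_delta by blast
  show ?thesis
    by (rule exI[of _ "d/2"]) (use d in \<open>auto simp: dist_real_def\<close>)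
qed

lemma arith_lower:
  fixes pA pB pC g h ga d y :: real
  shows "pC \<le> pA + 1 - pB \<Longrightarrow> g - d/4 < pC \<Longrightarrow> h - d/4 < pB \<Longrightarrow> ga - d/4 < g
    \<Longrightarrow> 1 - d/4 < h \<Longrightarrow> d = ga - y \<Longrightarrow> y < pA"
  by linarith

lemma sum_conv:
  fixes Y1 Y2 :: "real \<Rightarrow> 'a \<Rightarrow> real" and r :: "real \<Rightarrow> real"
  assumes m1: "\<And>t. Y1 t \<in> borel_measurable M" and m2: "\<And>t. Y2 t \<in> borel_measurable M"
    and r0: "(r \<longlongrightarrow> 0) F" and rpos: "eventually (\<lambda>t. r t \<ge> 0) F"
    and G1: "cont_distr_fun G1" and G0: "cont_distr_fun G0"
    and l1: "\<And>s. ((\<lambda>t. prob {\<xi>\<in>space M. Y1 t \<xi> \<le> s}) \<longlongrightarrow> G1 s) F"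
    and l2: "\<And>s. ((\<lambda>t. prob {\<xi>\<in>space M. Y2 t \<xi> \<le> s}) \<longlongrightarrow> G0 s) F"
  shows "((\<lambda>t. prob {\<xi>\<in>space M. Y1 t \<xi> + r t * Y2 t \<xi> \<le> a}) \<longlongrightarrow> G1 a) F"
proof (rule order_tendstoI)
  fix y assume "y > G1 a"
  define \<delta> where "\<delta> = y - G1 a"
  have \<delta>: "\<delta>/4 > 0" using \<open>y > G1 a\<close> by (simp add: \<delta>_def)
  obtain \<eta> where \<eta>: "\<eta> > 0" "\<bar>G1 (a + \<eta>) - G1 a\<bar> < \<delta>/4" using cont_near[OF G1 \<delta>] by blast
  obtain m where m: "G0 m < \<delta>/4" using cdf_tails[OF G0 \<delta>] by blast
  define K where "K = \<bar>m\<bar> + 1"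
  have K: "K > 0" "G0 (-K) \<le> G0 m" using cont_distr_mono[OF G0, of "-K" m] by (auto simp: K_def)
  have e1: "eventually (\<lambda>t. r t < \<eta> / K) F" using order_tendstoD(2)[OF r0] \<eta> K by simp
  have e2: "eventually (\<lambda>t. prob {\<xi>\<in>space M. Y1 t \<xi> \<le> a + \<eta>} < G1 (a + \<eta>) + \<delta>/4) F"
    using order_tendstoD(2)[OF l1[of "a + \<eta>"]] \<delta> by simp
  have e3: "eventually (\<lambda>t. prob {\<xi>\<in>space M. Y2 t \<xi> \<le> -K} < G0 (-K) + \<delta>/4) F"
    using order_tendstoD(2)[OF l2[of "-K"]] \<delta> by simp
  show "\<forall>\<^sub>F t in F. prob {\<xi> \<in> space M. Y1 t \<xi> + r t * Y2 t \<xi> \<le> a} < y"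
    using e1 e2 e3 rpos
  proof eventually_elim
    case (elim t)
    let ?A = "{\<xi>\<in>space M. Y1 t \<xi> \<le> a + \<eta>}" and ?B = "{\<xi>\<in>space M. Y2 t \<xi> \<le> -K}"
    have mA: "?A \<in> events" and mB: "?B \<in> events" using m1[of t] m2[of t] by measurable
    have rK: "r t * K < \<eta>" using elim(1) K by (simp add: pos_less_divide_eq)
    have "{\<xi> \<in> space M. Y1 t \<xi> + r t * Y2 t \<xi> \<le> a} \<subseteq> ?A \<union> ?B"
    proof safe
      fix \<xi> assume \<xi>: "\<xi> \<in> space M" "Y1 t \<xi> + r t * Y2 t \<xi> \<le> a" "\<not> Y2 t \<xi> \<le> -K"
      have "r t * (-K) \<le> r t * Y2 t \<xi>" using \<xi>(3) elim(4) by (intro mult_left_mono) auto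
      then show "Y1 t \<xi> \<le> a + \<eta>" using \<xi>(2) rK by simp
    qed
    then have "prob {\<xi> \<in> space M. Y1 t \<xi> + r t * Y2 t \<xi> \<le> a} \<le> prob (?A \<union> ?B)"
      by (intro finite_measure_mono) (use mA mB in auto)
    also have "\<dots> \<le> prob ?A + prob ?B" by (rule measure_Un_le) (use mA mB in auto)
    finally have P1: "prob {\<xi> \<in> space M. Y1 t \<xi> + r t * Y2 t \<xi> \<le> a} \<le> prob ?A + prob ?B" .
    have Q: "G1 (a+\<eta>) < G1 a + \<delta>/4" using \<eta>(2) unfolding abs_less_iff by linarith
    have P2: "prob ?A < G1 a + \<delta>/2" using elim(2) Q
      using [[show_types]] by linarith
    have P3: "prob ?B < \<delta>/2" using elim(3) m K by auto
    have eq: "(G1 a + \<delta>/2) + \<delta>/2 = y" by (simp add: \<delta>_def field_simps)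
    have P4: "prob ?A + prob ?B < y" using add_strict_mono[OF P2 P3] unfolding eq .
    show ?case by (rule le_less_trans[OF P1 P4])
  qed
next
  fix y assume "y < G1 a"
  define \<delta> where "\<delta> = G1 a - y"
  have \<delta>: "\<delta>/4 > 0" using \<open>y < G1 a\<close> by (simp add: \<delta>_def)
  obtain \<eta> where \<eta>: "\<eta> > 0" "\<bar>G1 (a - \<eta>) - G1 a\<bar> < \<delta>/4" using cont_near[OF G1 \<delta>] by blast
  obtain m where m: "G0 m > 1 - \<delta>/4" using cdf_tails[OF G0 \<delta>] by blast
  define K where "K = \<bar>m\<bar> + 1"
  have K: "K > 0" "G0 m \<le> G0 K" using cont_distr_mono[OF G0, of m K] by (auto simp: K_def)
  have e1: "eventually (\<lambda>t. r t < \<eta> / K) F" using order_tendstoD(2)[OF r0] \<eta> K by simp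
  have e2: "eventually (\<lambda>t. prob {\<xi>\<in>space M. Y1 t \<xi> \<le> a - \<eta>} > G1 (a - \<eta>) - \<delta>/4) F"
    using order_tendstoD(1)[OF l1[of "a - \<eta>"]] \<delta> by simp
  have e3: "eventually (\<lambda>t. prob {\<xi>\<in>space M. Y2 t \<xi> \<le> K} > G0 K - \<delta>/4) F"
    using order_tendstoD(1)[OF l2[of "K"]] \<delta> by simp
  show "\<forall>\<^sub>F t in F. y < prob {\<xi> \<in> space M. Y1 t \<xi> + r t * Y2 t \<xi> \<le> a}"
    using e1 e2 e3 rpos
  proof eventually_elim
    case (elim t)
    let ?A = "{\<xi>\<in>space M. Y1 t \<xi> + r t * Y2 t \<xi> \<le> a}" and ?B = "{\<xi>\<in>space M. Y2 t \<xi> \<le> K}"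
    let ?C = "{\<xi>\<in>space M. Y1 t \<xi> \<le> a - \<eta>}"
    have mA: "?A \<in> events" and mB: "?B \<in> events" and mC: "?C \<in> events"
      using m1[of t] m2[of t] by measurable
    have rK: "r t * K < \<eta>" using elim(1) K by (simp add: pos_less_divide_eq)
    have "?C \<subseteq> ?A \<union> (space M - ?B)"
    proof safe
      fix \<xi> assume \<xi>: "\<xi> \<in> space M" "Y1 t \<xi> \<le> a - \<eta>" "Y2 t \<xi> \<le> K"
      have "r t * Y2 t \<xi> \<le> r t * K" using \<xi>(3) elim(4) by (intro mult_left_mono) auto
      then show "Y1 t \<xi> + r t * Y2 t \<xi> \<le> a" using \<xi>(2) rK by simp
    qed
    then have "prob ?C \<le> prob (?A \<union> (space M - ?B))"
      by (intro finite_measure_mono) (use mA mB in auto)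
    also have "\<dots> \<le> prob ?A + prob (space M - ?B)" by (rule measure_Un_le) (use mA mB in auto)
    also have "\<dots> = prob ?A + 1 - prob ?B" using prob_compl[OF mB] by simp
    finally have P1: "prob ?C \<le> prob ?A + 1 - prob ?B" .
    have Q: "G1 a - \<delta>/4 < G1 (a-\<eta>)" using \<eta>(2) unfolding abs_less_iff by linarith
    have Q2: "1 - \<delta>/4 < G0 K" using m K by linarith
    show ?case by (rule arith_lower[OF P1 elim(2) elim(3) Q Q2 \<delta>_def])
  qed
qed

lemma gap_to_zero:
  fixes U Z :: "real \<Rightarrow> 'a \<Rightarrow> real"
  assumes mU: "\<And>t. U t \<in> borel_measurable M" and mZ: "\<And>t. Z t \<in> borel_measurable M"
    and N: "\<And>t. N t \<in> events" and N0: "((\<lambda>t. prob (N t)) \<longlongrightarrow> 0) F"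
    and le: "eventually (\<lambda>t. \<forall>\<xi>\<in>space M - N t. U t \<xi> \<le> Z t \<xi>) F"
    and lU: "((\<lambda>t. prob {\<xi>\<in>space M. U t \<xi> \<le> a}) \<longlongrightarrow> g) F"
    and lZ: "((\<lambda>t. prob {\<xi>\<in>space M. Z t \<xi> \<le> a}) \<longlongrightarrow> g) F"
  shows "((\<lambda>t. prob ({\<xi>\<in>space M. U t \<xi> \<le> a} - {\<xi>\<in>space M. Z t \<xi> \<le> a})) \<longlongrightarrow> 0) F"
proof (rule tendsto_sandwich[of "\<lambda>_. 0" _ _
    "\<lambda>t. prob {\<xi>\<in>space M. U t \<xi> \<le> a} - prob {\<xi>\<in>space M. Z t \<xi> \<le> a} + prob (N t)"])
  show "\<forall>\<^sub>F t in F. 0 \<le> prob ({\<xi>\<in>space M. U t \<xi> \<le> a} - {\<xi>\<in>space M. Z t \<xi> \<le> a})"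
    by simp
  show "\<forall>\<^sub>F t in F. prob ({\<xi>\<in>space M. U t \<xi> \<le> a} - {\<xi>\<in>space M. Z t \<xi> \<le> a})
     \<le> prob {\<xi>\<in>space M. U t \<xi> \<le> a} - prob {\<xi>\<in>space M. Z t \<xi> \<le> a} + prob (N t)"
    using le
  proof eventually_elim
    case (elim t)
    let ?A = "{\<xi>\<in>space M. U t \<xi> \<le> a}" and ?B = "{\<xi>\<in>space M. Z t \<xi> \<le> a}"
    have mA: "?A \<in> events" and mB: "?B \<in> events" using mU[of t] mZ[of t] by measurable
    have d: "prob (?A - ?B) = prob ?A - prob (?A \<inter> ?B)" by (rule finite_measure_Diff'[OF mA mB])
    have "?B \<subseteq> (?A \<inter> ?B) \<union> N t" using elim by force
    then have "prob ?B \<le> prob ((?A \<inter> ?B) \<union> N t)" by (intro finite_measure_mono) (use mA mB N in auto)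
    also have "\<dots> \<le> prob (?A \<inter> ?B) + prob (N t)" by (rule measure_Un_le) (use mA mB N in auto)
    finally have "prob ?B \<le> prob (?A \<inter> ?B) + prob (N t)" .
    then show ?case using d by linarith
  qed
  show "((\<lambda>t. 0) \<longlongrightarrow> (0::real)) F" by simp
  show "((\<lambda>t. prob {\<xi>\<in>space M. U t \<xi> \<le> a} - prob {\<xi>\<in>space M. Z t \<xi> \<le> a} + prob (N t)) \<longlongrightarrow> 0) F"
    using tendsto_add[OF tendsto_diff[OF lU lZ] N0] by simp
qed

lemma arith_four:
  fixes p a b c d x y z w :: real
  shows "p \<le> a + b + (1 - c) + d \<Longrightarrow> a + b + (1 - c) + d < y \<Longrightarrow> p < y"
  by linarith

lemma delta_small:
  fixes U Z :: "real \<Rightarrow> 'a \<Rightarrow> real"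
  assumes mU: "\<And>t. U t \<in> borel_measurable M" and mZ: "\<And>t. Z t \<in> borel_measurable M"
    and N: "\<And>t. N t \<in> events" and N0: "((\<lambda>t. prob (N t)) \<longlongrightarrow> 0) F"
    and le: "eventually (\<lambda>t. \<forall>\<xi>\<in>space M - N t. U t \<xi> \<le> Z t \<xi>) F"
    and G: "cont_distr_fun G"
    and lU: "\<And>a. ((\<lambda>t. prob {\<xi>\<in>space M. U t \<xi> \<le> a}) \<longlongrightarrow> G a) F"
    and lZ: "\<And>a. ((\<lambda>t. prob {\<xi>\<in>space M. Z t \<xi> \<le> a}) \<longlongrightarrow> G a) F"
    and e: "e > 0"
  shows "((\<lambda>t. prob {\<xi>\<in>space M. e < Z t \<xi> - U t \<xi>}) \<longlongrightarrow> 0) F"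
proof (rule order_tendstoI)
  fix y :: real assume "y < 0"
  then show "\<forall>\<^sub>F t in F. y < prob {\<xi>\<in>space M. e < Z t \<xi> - U t \<xi>}"
    by (intro always_eventually) (auto intro: less_le_trans[OF _ measure_nonneg])
next
  fix \<delta> :: real assume "0 < \<delta>"
  then have \<delta>: "\<delta>/4 > 0" by simp
  obtain a0 where a0: "G a0 < \<delta>/4" using cdf_tails[OF G \<delta>] by auto
  obtain b where b: "G b > 1 - \<delta>/4" using cdf_tails[OF G \<delta>] by auto
  define K where "K = nat \<lceil>(b - a0)/e\<rceil>"
  define aa where "aa j = a0 + real j * e" for j :: nat
  have "(b - a0)/e \<le> real K" unfolding K_def by linarith
  then have "b - a0 \<le> real K * e" using e by (simp add: pos_divide_le_eq)
  then have "b \<le> aa K" by (simp add: aa_def)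
  then have GK: "G b \<le> G (aa K)" by (rule cont_distr_mono[OF G])
  define D where "D j t = {\<xi>\<in>space M. U t \<xi> \<le> aa j} - {\<xi>\<in>space M. Z t \<xi> \<le> aa j}" for j t
  define R where "R t = prob (N t) + prob {\<xi>\<in>space M. U t \<xi> \<le> a0}
      + (1 - prob {\<xi>\<in>space M. Z t \<xi> \<le> aa K}) + (\<Sum>j\<in>{1..K}. prob (D j t))" for t
  have "(R \<longlongrightarrow> 0 + G a0 + (1 - G (aa K)) + (\<Sum>j\<in>{1..K}. 0)) F"
    unfolding R_def D_def
    by (intro tendsto_add tendsto_diff tendsto_const N0 lU lZ tendsto_sum
        gap_to_zero[OF mU mZ N N0 le lU lZ])
  then have "(R \<longlongrightarrow> G a0 + (1 - G (aa K))) F" by simp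
  moreover have "G a0 + (1 - G (aa K)) < \<delta>" using a0 b GK \<delta> by linarith
  ultimately have ev: "eventually (\<lambda>t. R t < \<delta>) F" by (rule order_tendstoD(2))
  show "\<forall>\<^sub>F t in F. prob {\<xi>\<in>space M. e < Z t \<xi> - U t \<xi>} < \<delta>"
    using ev le
  proof eventually_elim
    case (elim t)
    let ?S = "{\<xi>\<in>space M. e < Z t \<xi> - U t \<xi>}"
    let ?A = "{\<xi>\<in>space M. U t \<xi> \<le> a0}" and ?B = "{\<xi>\<in>space M. Z t \<xi> \<le> aa K}"
    have mA: "?A \<in> events" and mB: "?B \<in> events" using mU[of t] mZ[of t] by measurable
    have mD: "D j t \<in> events" for j unfolding D_def using mU[of t] mZ[of t] by measurable
    have incl: "?S \<subseteq> N t \<union> ?A \<union> (space M - ?B) \<union> (\<Union>j\<in>{1..K}. D j t)"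
    proof
      fix \<xi> assume \<xi>S: "\<xi> \<in> ?S"
      show "\<xi> \<in> N t \<union> ?A \<union> (space M - ?B) \<union> (\<Union>j\<in>{1..K}. D j t)"
      proof (cases "\<xi> \<in> N t \<or> U t \<xi> \<le> a0 \<or> \<not> Z t \<xi> \<le> aa K")
        case True then show ?thesis using \<xi>S by auto
      next
        case False
        then have nN: "\<xi> \<notin> N t" and Ua: "a0 < U t \<xi>" and ZK: "Z t \<xi> \<le> aa K" by auto
        have sp: "\<xi> \<in> space M" and gap: "e < Z t \<xi> - U t \<xi>" using \<xi>S by auto
        define q where "q = (U t \<xi> - a0) / e"
        have qpos: "q > 0" using Ua e by (simp add: q_def)
        have Uq: "U t \<xi> = a0 + q * e" using e by (simp add: q_def)
        define c where "c = \<lceil>q\<rceil>"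
        have c1: "c \<ge> 1" using qpos by (simp add: c_def)
        have cq: "q \<le> of_int c" "of_int c - 1 < q" using ceiling_correct[of q] by (auto simp: c_def)
        define j where "j = nat c"
        have jc: "real j = of_int c" using c1 by (simp add: j_def)
        have "q * e \<le> real j * e" using cq(1) jc e by (intro mult_right_mono) auto
        then have j1: "U t \<xi> \<le> aa j" by (simp add: aa_def Uq)
        have "real j * e \<le> (q + 1) * e" using cq(2) jc e by (intro mult_right_mono) auto
        then have j2: "aa j \<le> U t \<xi> + e" by (simp add: aa_def Uq algebra_simps)
        have "q * e < real K * e" using Uq gap ZK e unfolding aa_def by linarith
        then have "q < real K" using e by simp
        then have "c \<le> int K" unfolding c_def by (simp add: ceiling_le_iff)
        then have jK: "j \<in> {1..K}" using c1 unfolding j_def by auto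
        have "\<xi> \<in> D j t" unfolding D_def using sp j1 j2 gap by auto
        then show ?thesis using jK by blast
      qed
    qed
    have "prob ?S \<le> prob (N t \<union> ?A \<union> (space M - ?B) \<union> (\<Union>j\<in>{1..K}. D j t))"
      by (rule finite_measure_mono[OF incl]) (use mA mB mD N in auto)
    also have "\<dots> \<le> prob (N t \<union> ?A \<union> (space M - ?B)) + prob (\<Union>j\<in>{1..K}. D j t)"
      by (rule measure_Un_le) (use mA mB mD N in auto)
    also have "\<dots> \<le> prob (N t \<union> ?A) + prob (space M - ?B) + prob (\<Union>j\<in>{1..K}. D j t)"
      using measure_Un_le[of "N t \<union> ?A" M "space M - ?B"] mA mB N by auto
    also have "\<dots> \<le> prob (N t) + prob ?A + prob (space M - ?B) + prob (\<Union>j\<in>{1..K}. D j t)"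
      using measure_Un_le[of "N t" M ?A] mA N by auto
    also have "\<dots> \<le> prob (N t) + prob ?A + (1 - prob ?B) + (\<Sum>j\<in>{1..K}. prob (D j t))"
      using finite_measure_subadditive_finite[of "{1..K}" "\<lambda>j. D j t"] mD prob_compl[OF mB] by auto
    finally have P1: "prob ?S \<le> prob (N t) + prob ?A + (1 - prob ?B) + (\<Sum>j\<in>{1..K}. prob (D j t))" .
    show ?case by (rule arith_four[OF P1 elim(1)[unfolded R_def]])
  qed
qed

lemma arith_up:
  fixes p a b f fs y d :: real
  shows "p \<le> a + b \<Longrightarrow> a < f + d/4 \<Longrightarrow> b < d/4 \<Longrightarrow> f < fs + d/2 \<Longrightarrow> d = y - fs \<Longrightarrow> p < y"
  by linarith

lemma arith_lo:
  fixes p a n fs y d :: real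
  shows "a \<le> p + n \<Longrightarrow> a > fs - d/2 \<Longrightarrow> n < d/2 \<Longrightarrow> d = fs - y \<Longrightarrow> y < p"
  by linarith

lemma main_real:
  fixes X Y1 Y2 Z :: "real \<Rightarrow> 'a \<Rightarrow> real" and r :: "real \<Rightarrow> real" and D :: "real measure"
  assumes mX: "\<And>t. X t \<in> borel_measurable M" and m1: "\<And>t. Y1 t \<in> borel_measurable M"
    and m2: "\<And>t. Y2 t \<in> borel_measurable M" and mZ: "\<And>t. Z t \<in> borel_measurable M"
    and N: "\<And>t. N t \<in> events" and N0: "((\<lambda>t. prob (N t)) \<longlongrightarrow> 0) F"
    and r0: "(r \<longlongrightarrow> 0) F" and rpos: "eventually (\<lambda>t. r t \<ge> 0) F"
    and Zge: "eventually (\<lambda>t. \<forall>\<xi>\<in>space M - N t. Y1 t \<xi> + r t * Y2 t \<xi> \<le> Z t \<xi>) F"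
    and G1: "cont_distr_fun G1" and G0: "cont_distr_fun G0"
    and l1: "\<And>s. ((\<lambda>t. prob {\<xi>\<in>space M. Y1 t \<xi> \<le> s}) \<longlongrightarrow> G1 s) F"
    and l2: "\<And>s. ((\<lambda>t. prob {\<xi>\<in>space M. Y2 t \<xi> \<le> s}) \<longlongrightarrow> G0 s) F"
    and lZ: "\<And>s. ((\<lambda>t. prob {\<xi>\<in>space M. Z t \<xi> \<le> s}) \<longlongrightarrow> G1 s) F"
    and D: "real_distribution D"
    and hyp: "\<And>s. isCont (cdf D) s \<Longrightarrow>
       ((\<lambda>t. prob {\<xi>\<in>space M. X t \<xi> - (Y1 t \<xi> + r t * Y2 t \<xi>) \<le> s}) \<longlongrightarrow> cdf D s) F"
    and s: "isCont (cdf D) s"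
  shows "((\<lambda>t. prob {\<xi>\<in>space M. X t \<xi> - Z t \<xi> \<le> s}) \<longlongrightarrow> cdf D s) F"
proof -
  interpret D: real_distribution D by (rule D)
  define U where "U t \<xi> = Y1 t \<xi> + r t * Y2 t \<xi>" for t \<xi>
  have mU: "U t \<in> borel_measurable M" for t unfolding U_def using m1[of t] m2[of t] by measurable
  have lU: "((\<lambda>t. prob {\<xi>\<in>space M. U t \<xi> \<le> a}) \<longlongrightarrow> G1 a) F" for a
    unfolding U_def by (rule sum_conv[OF m1 m2 r0 rpos G1 G0 l1 l2])
  have UZ: "eventually (\<lambda>t. \<forall>\<xi>\<in>space M - N t. U t \<xi> \<le> Z t \<xi>) F" using Zge by (simp add: U_def)
  have gap: "e > 0 \<Longrightarrow> ((\<lambda>t. prob {\<xi>\<in>space M. e < Z t \<xi> - U t \<xi>}) \<longlongrightarrow> 0) F" for e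
    by (rule delta_small[OF mU mZ N N0 UZ G1 lU lZ])
  show ?thesis
  proof (rule order_tendstoI)
    fix y assume y: "y < cdf D s"
    define d where "d = cdf D s - y"
    have d: "d/2 > 0" using y by (simp add: d_def)
    have e1: "eventually (\<lambda>t. prob {\<xi>\<in>space M. X t \<xi> - U t \<xi> \<le> s} > cdf D s - d/2) F"
      using order_tendstoD(1)[OF hyp[OF s]] d unfolding U_def by simp
    have e2: "eventually (\<lambda>t. prob (N t) < d/2) F" using order_tendstoD(2)[OF N0 d(1)] by simp
    show "\<forall>\<^sub>F t in F. y < prob {\<xi>\<in>space M. X t \<xi> - Z t \<xi> \<le> s}"
      using e1 e2 UZ
    proof eventually_elim
      case (elim t)
      let ?V = "{\<xi>\<in>space M. X t \<xi> - U t \<xi> \<le> s}" and ?W = "{\<xi>\<in>space M. X t \<xi> - Z t \<xi> \<le> s}"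
      have mV: "?V \<in> events" and mW: "?W \<in> events" using mX[of t] mU[of t] mZ[of t] by measurable
      have "?V \<subseteq> ?W \<union> N t" using elim(3) by force
      then have "prob ?V \<le> prob (?W \<union> N t)" by (intro finite_measure_mono) (use mW N in auto)
      also have "\<dots> \<le> prob ?W + prob (N t)" by (rule measure_Un_le) (use mW N in auto)
      finally show ?case by (rule arith_lo[OF _ elim(1) elim(2) d_def])
    qed
  next
    fix y assume y: "y > cdf D s"
    define d where "d = y - cdf D s"
    have d: "d/2 > 0" "d/4 > 0" using y by (auto simp: d_def)
    have "((cdf D) \<longlongrightarrow> cdf D s) (at_right s)"
      using D.cdf_is_right_cont[of s] by (simp add: continuous_within)
    from order_tendstoD(2)[OF this, of "cdf D s + d/2"] d
    have "eventually (\<lambda>x. cdf D x < cdf D s + d/2) (at_right s)" by simp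
    then obtain s1 where s1: "s1 > s" "\<And>x. s < x \<Longrightarrow> x < s1 \<Longrightarrow> cdf D x < cdf D s + d/2"
      by (auto simp: eventually_at_right[of s "s+1"])
    have "countable {a. \<not> isCont (cdf D) a}"
      by (rule mono_ctble_discont) (auto simp: mono_def D.cdf_nondecreasing)
    from open_minus_countable[OF this, of "{s<..<s1}"] s1
    obtain s' where s': "s < s'" "s' < s1" "isCont (cdf D) s'" by auto
    have Fs': "cdf D s' < cdf D s + d/2" using s1 s' by auto
    have e1: "eventually (\<lambda>t. prob {\<xi>\<in>space M. X t \<xi> - U t \<xi> \<le> s'} < cdf D s' + d/4) F"
      using order_tendstoD(2)[OF hyp[OF s'(3)]] d unfolding U_def by simp
    have e2: "eventually (\<lambda>t. prob {\<xi>\<in>space M. s' - s < Z t \<xi> - U t \<xi>} < d/4) F"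
      using order_tendstoD(2)[OF gap d(2)] s' by simp
    show "\<forall>\<^sub>F t in F. prob {\<xi>\<in>space M. X t \<xi> - Z t \<xi> \<le> s} < y"
      using e1 e2
    proof eventually_elim
      case (elim t)
      let ?V = "{\<xi>\<in>space M. X t \<xi> - U t \<xi> \<le> s'}" and ?W = "{\<xi>\<in>space M. X t \<xi> - Z t \<xi> \<le> s}"
      let ?E = "{\<xi>\<in>space M. s' - s < Z t \<xi> - U t \<xi>}"
      have mV: "?V \<in> events" and mE: "?E \<in> events" using mX[of t] mU[of t] mZ[of t] by measurable
      have "?W \<subseteq> ?V \<union> ?E" by force
      then have "prob ?W \<le> prob (?V \<union> ?E)" by (intro finite_measure_mono) (use mV mE in auto)
      also have "\<dots> \<le> prob ?V + prob ?E" by (rule measure_Un_le) (use mV mE in auto)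
      finally show ?case by (rule arith_up[OF _ elim(1) elim(2) Fs' d_def])
    qed
  qed
qed

end



lemma urp_nth:
  assumes p: "up_right_path p" and i: "i < length p"
  shows "fst (hd p) \<le> fst (p ! i) \<and> snd (hd p) \<le> snd (p ! i) \<and>
         fst (p ! i) + snd (p ! i) = fst (hd p) + snd (hd p) + int i"
  using i
proof (induction i)
  case 0
  then show ?case using p by (simp add: up_right_path_def hd_conv_nth)
next
  case (Suc i)
  then have IH: "fst (hd p) \<le> fst (p ! i) \<and> snd (hd p) \<le> snd (p ! i) \<and>
         fst (p ! i) + snd (p ! i) = fst (hd p) + snd (hd p) + int i" by simp
  have "p ! Suc i = (fst (p ! i) + 1, snd (p ! i)) \<or> p ! Suc i = (fst (p ! i), snd (p ! i) + 1)"
    using p Suc.prems unfolding up_right_path_def by blast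
  then show ?case using IH by auto
qed

lemma urp_last_sum:
  assumes p: "up_right_path p" and z: "z \<in> set p"
  shows "fst z + snd z \<le> fst (last p) + snd (last p)"
proof -
  from z obtain i where i: "i < length p" "z = p ! i" by (auto simp: in_set_conv_nth)
  have ne: "p \<noteq> []" using p by (simp add: up_right_path_def)
  have l: "last p = p ! (length p - 1)" using ne by (simp add: last_conv_nth)
  have "length p - 1 < length p" using ne by simp
  from urp_nth[OF p this] urp_nth[OF p i(1)] i l show ?thesis by auto
qed

lemma urp_tail:
  assumes q: "up_right_path (e # q')" and z: "z \<in> set q'"
  shows "fst e \<le> fst z \<and> fst e + snd e < fst z + snd z"
proof -
  from z obtain i where i: "i < length q'" "z = q' ! i" by (auto simp: in_set_conv_nth)
  have "Suc i < length (e # q')" using i by simp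
  from urp_nth[OF q this] i show ?thesis by auto
qed

lemma urp_append:
  assumes p: "up_right_path p" and lp: "last p = e" and q: "up_right_path (e # q')"
  shows "up_right_path (p @ q')"
proof -
  have ne: "p \<noteq> []" using p by (simp add: up_right_path_def)
  let ?st = "\<lambda>a b::int\<times>int. b = (fst a + 1, snd a) \<or> b = (fst a, snd a + 1)"
  have P: "\<And>i. Suc i < length p \<Longrightarrow> ?st (p ! i) (p ! Suc i)" using p by (simp add: up_right_path_def)
  have Q: "\<And>i. Suc i < Suc (length q') \<Longrightarrow> ?st ((e # q') ! i) ((e # q') ! Suc i)"
    using q unfolding up_right_path_def by (metis length_Cons)
  have "?st ((p @ q') ! i) ((p @ q') ! Suc i)" if i: "Suc i < length (p @ q')" for i
  proof (cases "Suc i < length p")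
    case True
    then show ?thesis using P[OF True] by (simp add: nth_append)
  next
    case False
    show ?thesis
    proof (cases "Suc i = length p")
      case True
      have "p ! i = last p" using True ne by (simp add: last_conv_nth flip: True)
      moreover have "0 < length q'" using i True by simp
      ultimately show ?thesis using Q[of 0] True lp by (simp add: nth_append)
    next
      case False2: False
      with False have gi: "length p \<le> i" by simp
      define k where "k = i - length p"
      have "Suc (Suc k) < Suc (length q')" using i gi by (simp add: k_def)
      then have "?st ((e # q') ! Suc k) ((e # q') ! Suc (Suc k))" by (rule Q)
      moreover have "i = length p + k" "Suc i - length p = Suc k" using gi by (auto simp: k_def)
      ultimately show ?thesis using gi by (simp add: nth_append)
    qed
  qed
  then show ?thesis using ne unfolding up_right_path_def by simp
qed

lemma LPP_superadd:
  fixes w :: "int \<times> int \<Rightarrow> real"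
  assumes SA: "\<And>z. z \<in> SA \<Longrightarrow> fst z < fst e"
    and B: "LPP w SA {e} = ereal b" and C: "LPP w {e} SE = ereal c" and L: "LPP w SA SE = ereal l"
  shows "b + c \<le> l"
proof (rule ccontr)
  assume "\<not> b + c \<le> l"
  then have lt: "l - c < b" by simp
  then have "ereal (l - c) < LPP w SA {e}" using B by simp
  then obtain p where p: "up_right_path p" "hd p \<in> SA" "last p = e"
      and sp: "l - c < (\<Sum>z \<in> set p - SA. w z)"
    unfolding LPP_def less_SUP_iff by auto
  let ?S1 = "\<Sum>z \<in> set p - SA. w z"
  have "ereal (l - ?S1) < LPP w {e} SE" using C sp by simp
  then obtain q where q: "up_right_path q" "hd q = e" "last q \<in> SE"
      and sq: "l - ?S1 < (\<Sum>z \<in> set q - {e}. w z)"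
    unfolding LPP_def less_SUP_iff by auto
  have qne: "q \<noteq> []" using q by (simp add: up_right_path_def)
  then obtain q' where qq: "q = e # q'" using q(2) by (cases q) auto
  have pq: "up_right_path (p @ q')" using urp_append[OF p(1) p(3)] q(1) qq by simp
  have hd: "hd (p @ q') \<in> SA" using p(2) p(1) by (cases p) (auto simp: up_right_path_def)
  have lst: "last (p @ q') \<in> SE" using q(3) qq p(3) by (cases "q' = []") auto
  have eq': "set q - {e} = set q'" using qq urp_tail[of e q' e] q(1) by auto
  have d1: "set q' \<inter> SA = {}" using urp_tail[of e q'] q(1) qq SA by fastforce
  have d2: "(set p - SA) \<inter> set q' = {}"
  proof -
    have "fst z + snd z \<le> fst e + snd e" if "z \<in> set p" for z
      using urp_last_sum[OF p(1) that] p(3) by simp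
    then show ?thesis using urp_tail[of e q'] q(1) qq by fastforce
  qed
  have "set (p @ q') - SA = (set p - SA) \<union> set q'" using d1 by auto
  then have "(\<Sum>z \<in> set (p @ q') - SA. w z) = ?S1 + (\<Sum>z \<in> set q'. w z)"
    using d2 by (simp add: sum.union_disjoint)
  also have "\<dots> = ?S1 + (\<Sum>z \<in> set q - {e}. w z)" using eq' by simp
  finally have S: "(\<Sum>z \<in> set (p @ q') - SA. w z) = ?S1 + (\<Sum>z \<in> set q - {e}. w z)" .
  have "ereal (\<Sum>z \<in> set (p @ q') - SA. w z) \<le> LPP w SA SE"
    unfolding LPP_def by (rule SUP_upper) (use pq hd lst in auto)
  then have "?S1 + (\<Sum>z \<in> set q - {e}. w z) \<le> l" using S L by simp
  then show False using sq by simp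
qed




lemma abs_inf_div1: "c > 0 \<Longrightarrow> \<bar>(x - ereal m) / ereal c\<bar> = \<infinity> \<longleftrightarrow> \<bar>x\<bar> = \<infinity>"
  by (cases x) auto
lemma abs_inf_div2: "c > 0 \<Longrightarrow> \<bar>(x - ereal m + ereal m') / ereal c\<bar> = \<infinity> \<longleftrightarrow> \<bar>x\<bar> = \<infinity>"
  by (cases x) auto

lemma ereal_le1: "c > 0 \<Longrightarrow> ((ereal b - ereal m) / ereal c \<le> ereal s) \<longleftrightarrow> ((b - m) / c \<le> s)"
  by simp
lemma ereal_le2: "c > 0 \<Longrightarrow> ((ereal b - ereal m + ereal m') / ereal c \<le> ereal s) \<longleftrightarrow> ((b - m + m') / c \<le> s)"
  by simp

lemma ereal_le3: "c > 0 \<Longrightarrow> ((ereal a - ereal m) / ereal c - (ereal b + ereal d - ereal m) / ereal c \<le> ereal s)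
   \<longleftrightarrow> ((a - m) / c - (b + d - m) / c \<le> s)"
  by simp
lemma ereal_le4: "c > 0 \<Longrightarrow> ((ereal a - ereal m) / ereal c - (ereal l - ereal m) / ereal c \<le> ereal s)
   \<longleftrightarrow> ((a - m) / c - (l - m) / c \<le> s)"
  by simp

context prob_space begin

lemma neg_from:
  fixes f :: "real \<Rightarrow> 'a \<Rightarrow> ereal" and A :: "real \<Rightarrow> 'a \<Rightarrow> ereal"
  assumes mf: "\<And>t. f t \<in> borel_measurable M" and G: "cont_distr_fun G"
    and lim: "\<And>s. ((\<lambda>t. prob {\<xi> \<in> space M. f t \<xi> \<le> ereal s}) \<longlongrightarrow> G s) at_top"
    and eq: "\<And>t \<xi>. t > 0 \<Longrightarrow> \<bar>f t \<xi>\<bar> = \<infinity> \<longleftrightarrow> \<bar>A t \<xi>\<bar> = \<infinity>"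
  shows "((\<lambda>t. prob {\<xi> \<in> space M. \<bar>A t \<xi>\<bar> = \<infinity>}) \<longlongrightarrow> 0) at_top"
proof -
  have "((\<lambda>t. prob {\<xi> \<in> space M. \<bar>f t \<xi>\<bar> = \<infinity>}) \<longlongrightarrow> 0) at_top"
    by (rule infinite_negligible[OF mf G lim])
  moreover have "eventually (\<lambda>t. prob {\<xi> \<in> space M. \<bar>f t \<xi>\<bar> = \<infinity>} = prob {\<xi> \<in> space M. \<bar>A t \<xi>\<bar> = \<infinity>}) at_top"
    using eventually_gt_at_top[of "0::real"] by eventually_elim (simp add: eq)
  ultimately show ?thesis by (rule Lim_transform_eventually)
qed

lemma final:
  fixes A B C Lp :: "real \<Rightarrow> 'a \<Rightarrow> ereal" and \<mu> \<mu>0 \<nu> :: real and D :: "real measure"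
  assumes mA: "\<And>t. A t \<in> borel_measurable M" and mB: "\<And>t. B t \<in> borel_measurable M"
    and mC: "\<And>t. C t \<in> borel_measurable M" and mL: "\<And>t. Lp t \<in> borel_measurable M"
    and G0: "cont_distr_fun G0" and G1: "cont_distr_fun G1" and G2: "cont_distr_fun G2"
    and lA: "\<And>s. ((\<lambda>t. prob {\<xi> \<in> space M. (A t \<xi> - ereal (\<mu> * t)) / ereal (t powr (1/3)) \<le> ereal s}) \<longlongrightarrow> G2 s) at_top"
    and lL: "\<And>s. ((\<lambda>t. prob {\<xi> \<in> space M. (Lp t \<xi> - ereal (\<mu> * t)) / ereal (t powr (1/3)) \<le> ereal s}) \<longlongrightarrow> G1 s) at_top"
    and lC: "\<And>s. ((\<lambda>t. prob {\<xi> \<in> space M. (C t \<xi> - ereal (\<mu>0 * t powr \<nu>)) / ereal (t powr (\<nu>/3)) \<le> ereal s}) \<longlongrightarrow> G0 s) at_top"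
    and lB: "\<And>s. ((\<lambda>t. prob {\<xi> \<in> space M. (B t \<xi> - ereal (\<mu> * t) + ereal (\<mu>0 * t powr \<nu>)) / ereal (t powr (1/3)) \<le> ereal s}) \<longlongrightarrow> G1 s) at_top"
    and \<nu>: "\<nu> < 1"
    and sup: "eventually (\<lambda>t. \<forall>\<xi>\<in>space M. \<forall>b c l. B t \<xi> = ereal b \<longrightarrow> C t \<xi> = ereal c \<longrightarrow> Lp t \<xi> = ereal l \<longrightarrow> b + c \<le> l) at_top"
    and D: "real_distribution D"
    and hyp: "conv_distr M (\<lambda>t \<xi>. (A t \<xi> - ereal (\<mu> * t)) / ereal (t powr (1/3))
        - (B t \<xi> + C t \<xi> - ereal (\<mu> * t)) / ereal (t powr (1/3))) D"
  shows "conv_distr M (\<lambda>t \<xi>. (A t \<xi> - ereal (\<mu> * t)) / ereal (t powr (1/3))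
        - (Lp t \<xi> - ereal (\<mu> * t)) / ereal (t powr (1/3))) D"
proof -
  define N where "N t = {\<xi> \<in> space M. \<bar>A t \<xi>\<bar> = \<infinity> \<or> \<bar>B t \<xi>\<bar> = \<infinity> \<or> \<bar>C t \<xi>\<bar> = \<infinity> \<or> \<bar>Lp t \<xi>\<bar> = \<infinity>}" for t
  have mN: "N t \<in> events" for t unfolding N_def using mA[of t] mB[of t] mC[of t] mL[of t] by measurable
  have nA: "((\<lambda>t. prob {\<xi> \<in> space M. \<bar>A t \<xi>\<bar> = \<infinity>}) \<longlongrightarrow> 0) at_top"
    by (rule neg_from[OF _ G2 lA]) (use mA in measurable, simp add: abs_inf_div1)
  have nL: "((\<lambda>t. prob {\<xi> \<in> space M. \<bar>Lp t \<xi>\<bar> = \<infinity>}) \<longlongrightarrow> 0) at_top"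
    by (rule neg_from[OF _ G1 lL]) (use mL in measurable, simp add: abs_inf_div1)
  have nC: "((\<lambda>t. prob {\<xi> \<in> space M. \<bar>C t \<xi>\<bar> = \<infinity>}) \<longlongrightarrow> 0) at_top"
    by (rule neg_from[OF _ G0 lC]) (use mC in measurable, simp add: abs_inf_div1)
  have nB: "((\<lambda>t. prob {\<xi> \<in> space M. \<bar>B t \<xi>\<bar> = \<infinity>}) \<longlongrightarrow> 0) at_top"
    by (rule neg_from[OF _ G1 lB]) (use mB in measurable, simp add: abs_inf_div2)
  have N0: "((\<lambda>t. prob (N t)) \<longlongrightarrow> 0) at_top"
  proof (rule tendsto_sandwich[of "\<lambda>_. 0" _ _ "\<lambda>t. prob {\<xi> \<in> space M. \<bar>A t \<xi>\<bar> = \<infinity>}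
       + prob {\<xi> \<in> space M. \<bar>B t \<xi>\<bar> = \<infinity>} + prob {\<xi> \<in> space M. \<bar>C t \<xi>\<bar> = \<infinity>}
       + prob {\<xi> \<in> space M. \<bar>Lp t \<xi>\<bar> = \<infinity>}"])
    show "\<forall>\<^sub>F t in at_top. 0 \<le> prob (N t)" by simp
    show "((\<lambda>_. 0) \<longlongrightarrow> (0::real)) at_top" by simp
    show "((\<lambda>t. prob {\<xi> \<in> space M. \<bar>A t \<xi>\<bar> = \<infinity>}
       + prob {\<xi> \<in> space M. \<bar>B t \<xi>\<bar> = \<infinity>} + prob {\<xi> \<in> space M. \<bar>C t \<xi>\<bar> = \<infinity>}
       + prob {\<xi> \<in> space M. \<bar>Lp t \<xi>\<bar> = \<infinity>}) \<longlongrightarrow> 0) at_top"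
      using tendsto_add[OF tendsto_add[OF tendsto_add[OF nA nB] nC] nL] by simp
    show "\<forall>\<^sub>F t in at_top. prob (N t) \<le> prob {\<xi> \<in> space M. \<bar>A t \<xi>\<bar> = \<infinity>}
       + prob {\<xi> \<in> space M. \<bar>B t \<xi>\<bar> = \<infinity>} + prob {\<xi> \<in> space M. \<bar>C t \<xi>\<bar> = \<infinity>}
       + prob {\<xi> \<in> space M. \<bar>Lp t \<xi>\<bar> = \<infinity>}"
    proof (rule always_eventually, rule allI)
      fix t
      let ?a = "{\<xi> \<in> space M. \<bar>A t \<xi>\<bar> = \<infinity>}" and ?b = "{\<xi> \<in> space M. \<bar>B t \<xi>\<bar> = \<infinity>}"
      let ?c = "{\<xi> \<in> space M. \<bar>C t \<xi>\<bar> = \<infinity>}" and ?l = "{\<xi> \<in> space M. \<bar>Lp t \<xi>\<bar> = \<infinity>}"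
      have m: "?a \<in> events" "?b \<in> events" "?c \<in> events" "?l \<in> events"
        using mA[of t] mB[of t] mC[of t] mL[of t] by measurable
      have "N t = ?a \<union> ?b \<union> ?c \<union> ?l" unfolding N_def by auto
      then have "prob (N t) \<le> prob (?a \<union> ?b \<union> ?c) + prob ?l" using measure_Un_le[of "?a \<union> ?b \<union> ?c" M ?l] m by auto
      also have "\<dots> \<le> prob (?a \<union> ?b) + prob ?c + prob ?l" using measure_Un_le[of "?a \<union> ?b" M ?c] m by auto
      also have "\<dots> \<le> prob ?a + prob ?b + prob ?c + prob ?l" using measure_Un_le[of ?a M ?b] m by auto
      finally show "prob (N t) \<le> prob ?a + prob ?b + prob ?c + prob ?l" .
    qed
  qed
  define c where "c t = t powr (1/3)" for t :: real
  define dd where "dd t = t powr (\<nu>/3)" for t :: real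
  define X where "X t \<xi> = (real_of_ereal (A t \<xi>) - \<mu> * t) / c t" for t \<xi>
  define Y1 where "Y1 t \<xi> = (real_of_ereal (B t \<xi>) - \<mu> * t + \<mu>0 * t powr \<nu>) / c t" for t \<xi>
  define Y2 where "Y2 t \<xi> = (real_of_ereal (C t \<xi>) - \<mu>0 * t powr \<nu>) / dd t" for t \<xi>
  define Z where "Z t \<xi> = (real_of_ereal (Lp t \<xi>) - \<mu> * t) / c t" for t \<xi>
  define r where "r t = dd t / c t" for t
  have mX: "X t \<in> borel_measurable M" for t unfolding X_def using mA[of t] by measurable
  have mY1: "Y1 t \<in> borel_measurable M" for t unfolding Y1_def using mB[of t] by measurable
  have mY2: "Y2 t \<in> borel_measurable M" for t unfolding Y2_def using mC[of t] by measurable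
  have mZ: "Z t \<in> borel_measurable M" for t unfolding Z_def using mL[of t] by measurable
  have fin: "A t \<xi> = ereal (real_of_ereal (A t \<xi>)) \<and> B t \<xi> = ereal (real_of_ereal (B t \<xi>)) \<and>
      C t \<xi> = ereal (real_of_ereal (C t \<xi>)) \<and> Lp t \<xi> = ereal (real_of_ereal (Lp t \<xi>))"
    if "\<xi> \<in> space M - N t" for t \<xi> using that by (auto simp: N_def ereal_real)
  have pos: "\<forall>\<^sub>F t in at_top. (0::real) < t" by (rule eventually_gt_at_top)
  have cpos: "t > 0 \<Longrightarrow> c t > 0" "t > 0 \<Longrightarrow> dd t > 0" for t by (auto simp: c_def dd_def)
  have r0: "(r \<longlongrightarrow> 0) at_top"
  proof -
    have "((\<lambda>t. t powr (\<nu>/3 - 1/3)) \<longlongrightarrow> 0) at_top"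
      by (rule tendsto_neg_powr) (use \<nu> in \<open>auto simp: filterlim_ident\<close>)
    moreover have "eventually (\<lambda>t. t powr (\<nu>/3 - 1/3) = r t) at_top"
      using pos by eventually_elim (simp add: r_def c_def dd_def powr_diff)
    ultimately show ?thesis by (rule Lim_transform_eventually)
  qed
  have rpos: "eventually (\<lambda>t. r t \<ge> 0) at_top"
    using pos by eventually_elim (simp add: r_def c_def dd_def)
  have Zge: "eventually (\<lambda>t. \<forall>\<xi>\<in>space M - N t. Y1 t \<xi> + r t * Y2 t \<xi> \<le> Z t \<xi>) at_top"
    using pos sup
  proof eventually_elim
    case (elim t)
    show ?case
    proof
      fix \<xi> assume \<xi>: "\<xi> \<in> space M - N t"
      have "real_of_ereal (B t \<xi>) + real_of_ereal (C t \<xi>) \<le> real_of_ereal (Lp t \<xi>)"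
        using elim(2) \<xi> fin[OF \<xi>] by blast
      then have "(real_of_ereal (B t \<xi>) + real_of_ereal (C t \<xi>) - \<mu> * t) / c t \<le> Z t \<xi>"
        unfolding Z_def using cpos[OF elim(1)] by (intro divide_right_mono) auto
      moreover have "Y1 t \<xi> + r t * Y2 t \<xi> = (real_of_ereal (B t \<xi>) + real_of_ereal (C t \<xi>) - \<mu> * t) / c t"
        unfolding Y1_def Y2_def r_def using cpos[OF elim(1)] by (simp add: field_simps)
      ultimately show "Y1 t \<xi> + r t * Y2 t \<xi> \<le> Z t \<xi>" by simp
    qed
  qed
  have l1: "((\<lambda>t. prob {\<xi>\<in>space M. Y1 t \<xi> \<le> s}) \<longlongrightarrow> G1 s) at_top" for s
  proof (rule transfer_tendsto[OF _ _ mN N0 _ lB])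
    show "\<forall>\<^sub>F t in at_top. \<forall>\<xi>\<in>space M - N t. \<xi> \<in> {\<xi> \<in> space M. (B t \<xi> - ereal (\<mu> * t) + ereal (\<mu>0 * t powr \<nu>)) / ereal (t powr (1/3)) \<le> ereal s}
        \<longleftrightarrow> \<xi> \<in> {\<xi>\<in>space M. Y1 t \<xi> \<le> s}"
      using pos
    proof eventually_elim
      case (elim t)
      show ?case
      proof
        fix \<xi> assume \<xi>: "\<xi> \<in> space M - N t"
        obtain bb where hb: "B t \<xi> = ereal bb" using fin[OF \<xi>] by blast
        show "\<xi> \<in> {\<xi> \<in> space M. (B t \<xi> - ereal (\<mu> * t) + ereal (\<mu>0 * t powr \<nu>)) / ereal (t powr (1/3)) \<le> ereal s}
          \<longleftrightarrow> \<xi> \<in> {\<xi>\<in>space M. Y1 t \<xi> \<le> s}"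
        proof -
          have cp: "t powr (1/3) > 0" using elim by simp
          have Y: "Y1 t \<xi> = (bb - \<mu>*t + \<mu>0 * t powr \<nu>) / t powr (1/3)" by (simp add: Y1_def c_def hb)
          show ?thesis unfolding mem_Collect_eq hb ereal_le2[OF cp] Y using \<xi> by blast
        qed
      qed
    qed
  qed (use mB mY1 in measurable)

  have l2: "((\<lambda>t. prob {\<xi>\<in>space M. Y2 t \<xi> \<le> s}) \<longlongrightarrow> G0 s) at_top" for s
  proof (rule transfer_tendsto[OF _ _ mN N0 _ lC])
    show "\<forall>\<^sub>F t in at_top. \<forall>\<xi>\<in>space M - N t. \<xi> \<in> {\<xi> \<in> space M. (C t \<xi> - ereal (\<mu>0 * t powr \<nu>)) / ereal (t powr (\<nu>/3)) \<le> ereal s}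
        \<longleftrightarrow> \<xi> \<in> {\<xi>\<in>space M. Y2 t \<xi> \<le> s}"
      using pos
    proof eventually_elim
      case (elim t)
      show ?case
      proof
        fix \<xi> assume \<xi>: "\<xi> \<in> space M - N t"
        obtain bb where hb: "C t \<xi> = ereal bb" using fin[OF \<xi>] by blast
        have cp: "t powr (\<nu>/3) > 0" using elim by simp
        have Y: "Y2 t \<xi> = (bb - \<mu>0 * t powr \<nu>) / t powr (\<nu>/3)" by (simp add: Y2_def dd_def hb)
        show "\<xi> \<in> {\<xi> \<in> space M. (C t \<xi> - ereal (\<mu>0 * t powr \<nu>)) / ereal (t powr (\<nu>/3)) \<le> ereal s}
          \<longleftrightarrow> \<xi> \<in> {\<xi>\<in>space M. Y2 t \<xi> \<le> s}"
          unfolding mem_Collect_eq hb ereal_le1[OF cp] Y using \<xi> by blast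
      qed
    qed
  qed (use mC mY2 in measurable)
  have lZ: "((\<lambda>t. prob {\<xi>\<in>space M. Z t \<xi> \<le> s}) \<longlongrightarrow> G1 s) at_top" for s
  proof (rule transfer_tendsto[OF _ _ mN N0 _ lL])
    show "\<forall>\<^sub>F t in at_top. \<forall>\<xi>\<in>space M - N t. \<xi> \<in> {\<xi> \<in> space M. (Lp t \<xi> - ereal (\<mu> * t)) / ereal (t powr (1/3)) \<le> ereal s}
        \<longleftrightarrow> \<xi> \<in> {\<xi>\<in>space M. Z t \<xi> \<le> s}"
      using pos
    proof eventually_elim
      case (elim t)
      show ?case
      proof
        fix \<xi> assume \<xi>: "\<xi> \<in> space M - N t"
        obtain bb where hb: "Lp t \<xi> = ereal bb" using fin[OF \<xi>] by blast
        have cp: "t powr (1/3) > 0" using elim by simp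
        have Y: "Z t \<xi> = (bb - \<mu> * t) / t powr (1/3)" by (simp add: Z_def c_def hb)
        show "\<xi> \<in> {\<xi> \<in> space M. (Lp t \<xi> - ereal (\<mu> * t)) / ereal (t powr (1/3)) \<le> ereal s}
          \<longleftrightarrow> \<xi> \<in> {\<xi>\<in>space M. Z t \<xi> \<le> s}"
          unfolding mem_Collect_eq hb ereal_le1[OF cp] Y using \<xi> by blast
      qed
    qed
  qed (use mL mZ in measurable)
  have hyp': "((\<lambda>t. prob {\<xi>\<in>space M. X t \<xi> - (Y1 t \<xi> + r t * Y2 t \<xi>) \<le> s}) \<longlongrightarrow> cdf D s) at_top"
    if s: "isCont (cdf D) s" for s
  proof (rule transfer_tendsto[OF _ _ mN N0 _ hyp[unfolded conv_distr_def, rule_format, OF s]])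
    show "\<forall>\<^sub>F t in at_top. \<forall>\<xi>\<in>space M - N t. \<xi> \<in> {\<xi> \<in> space M. (A t \<xi> - ereal (\<mu> * t)) / ereal (t powr (1/3))
        - (B t \<xi> + C t \<xi> - ereal (\<mu> * t)) / ereal (t powr (1/3)) \<le> ereal s}
        \<longleftrightarrow> \<xi> \<in> {\<xi>\<in>space M. X t \<xi> - (Y1 t \<xi> + r t * Y2 t \<xi>) \<le> s}"
      using pos
    proof eventually_elim
      case (elim t)
      show ?case
      proof
        fix \<xi> assume \<xi>: "\<xi> \<in> space M - N t"
        obtain aa bb cc where h: "A t \<xi> = ereal aa" "B t \<xi> = ereal bb" "C t \<xi> = ereal cc"
          using fin[OF \<xi>] by blast
        have cp: "t powr (1/3) > 0" using elim by simp
        have Y: "X t \<xi> - (Y1 t \<xi> + r t * Y2 t \<xi>) = (aa - \<mu> * t) / t powr (1/3) - (bb + cc - \<mu> * t) / t powr (1/3)"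
          using cpos[OF elim] by (simp add: X_def Y1_def Y2_def r_def c_def dd_def h field_simps)
        show "\<xi> \<in> {\<xi> \<in> space M. (A t \<xi> - ereal (\<mu> * t)) / ereal (t powr (1/3))
          - (B t \<xi> + C t \<xi> - ereal (\<mu> * t)) / ereal (t powr (1/3)) \<le> ereal s}
          \<longleftrightarrow> \<xi> \<in> {\<xi>\<in>space M. X t \<xi> - (Y1 t \<xi> + r t * Y2 t \<xi>) \<le> s}"
          unfolding mem_Collect_eq h ereal_le3[OF cp] Y using \<xi> by blast
      qed
    qed
  qed (use mA mB mC mX mY1 mY2 in measurable)
  have concl: "((\<lambda>t. prob {\<xi>\<in>space M. X t \<xi> - Z t \<xi> \<le> s}) \<longlongrightarrow> cdf D s) at_top"
    if s: "isCont (cdf D) s" for s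
    by (rule main_real[OF mX mY1 mY2 mZ mN N0 r0 rpos Zge G1 G0 l1 l2 lZ D hyp' s])
  show ?thesis unfolding conv_distr_def
  proof (intro allI impI)
    fix s assume s: "isCont (cdf D) s"
    show "((\<lambda>t. prob {\<xi> \<in> space M. (A t \<xi> - ereal (\<mu> * t)) / ereal (t powr (1/3))
        - (Lp t \<xi> - ereal (\<mu> * t)) / ereal (t powr (1/3)) \<le> ereal s}) \<longlongrightarrow> cdf D s) at_top"
    proof (rule transfer_tendsto[OF _ _ mN N0 _ concl[OF s]])
      show "\<forall>\<^sub>F t in at_top. \<forall>\<xi>\<in>space M - N t. \<xi> \<in> {\<xi>\<in>space M. X t \<xi> - Z t \<xi> \<le> s} \<longleftrightarrow>
          \<xi> \<in> {\<xi> \<in> space M. (A t \<xi> - ereal (\<mu> * t)) / ereal (t powr (1/3))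
          - (Lp t \<xi> - ereal (\<mu> * t)) / ereal (t powr (1/3)) \<le> ereal s}"
        using pos
      proof eventually_elim
        case (elim t)
        show ?case
        proof
          fix \<xi> assume \<xi>: "\<xi> \<in> space M - N t"
          obtain aa ll where h: "A t \<xi> = ereal aa" "Lp t \<xi> = ereal ll"
            using fin[OF \<xi>] by blast
          have cp: "t powr (1/3) > 0" using elim by simp
          have Y: "X t \<xi> - Z t \<xi> = (aa - \<mu> * t) / t powr (1/3) - (ll - \<mu> * t) / t powr (1/3)"
            by (simp add: X_def Z_def c_def h)
          show "\<xi> \<in> {\<xi>\<in>space M. X t \<xi> - Z t \<xi> \<le> s} \<longleftrightarrow>
            \<xi> \<in> {\<xi> \<in> space M. (A t \<xi> - ereal (\<mu> * t)) / ereal (t powr (1/3))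
            - (Lp t \<xi> - ereal (\<mu> * t)) / ereal (t powr (1/3)) \<le> ereal s}"
            unfolding mem_Collect_eq h ereal_le4[OF cp] Y using \<xi> by blast
        qed
      qed
    qed (use mA mL mX mZ in measurable)
  qed
qed
end



lemma LPP_meas:
  assumes "\<And>q. \<omega> q \<in> borel_measurable M"
  shows "(\<lambda>\<xi>. LPP (\<lambda>q. \<omega> q \<xi>) SA SE) \<in> borel_measurable M"
  unfolding LPP_def
  by (rule borel_measurable_SUP) (auto intro!: borel_measurable_ereal borel_measurable_sum assms)

lemma Lplus_neg:
  fixes x :: "int \<Rightarrow> int"
  assumes x_decr: "\<And>k. x (k + 1) < x k" and x1: "x 1 < -1" and z: "z \<in> Lplus x"
  shows "fst z < 0"
proof -
  from z obtain k where k: "z = (k + x k, k)" "k > 0" by (auto simp: Lplus_def)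
  have "x k \<le> x 1 - (k - 1)" if "k \<ge> 1" for k
    using that
  proof (induction k rule: int_ge_induct)
    case base then show ?case by simp
  next
    case (step i) then show ?case using x_decr[of i] by simp
  qed
  then have "x k \<le> x 1 - (k - 1)" using k(2) by simp
  then show ?thesis using k x1 by simp
qed

lemma E_pos:
  fixes \<eta>0 u \<kappa> \<nu> :: real
  assumes \<eta>0: "\<eta>0 > 0" and \<nu>: "\<nu> < 1"
  shows "eventually (\<lambda>t. 0 \<le> fst (ipt ((\<eta>0 + u * t powr (-2/3)) * t - \<kappa> * t powr \<nu>) (t - t powr \<nu>))) at_top"
proof -
  define g where "g t = \<eta>0 - \<bar>u\<bar> * t powr (-2/3) - \<bar>\<kappa>\<bar> * t powr (\<nu> - 1)" for t :: real
  have "((\<lambda>t::real. t powr (-2/3)) \<longlongrightarrow> 0) at_top"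
    by (rule tendsto_neg_powr) (auto simp: filterlim_ident)
  moreover have "((\<lambda>t::real. t powr (\<nu> - 1)) \<longlongrightarrow> 0) at_top"
    by (rule tendsto_neg_powr) (use \<nu> in \<open>auto simp: filterlim_ident\<close>)
  ultimately
  have "(g \<longlongrightarrow> \<eta>0 - \<bar>u\<bar> * 0 - \<bar>\<kappa>\<bar> * 0) at_top"
    unfolding g_def by (intro tendsto_intros)
  then have "eventually (\<lambda>t. g t > 0) at_top" using \<eta>0 by (intro order_tendstoD(1)) auto
  then show ?thesis using eventually_gt_at_top[of "0::real"]
  proof eventually_elim
    case (elim t)
    have e1: "t powr (-2/3) * t \<ge> 0" using elim by simp
    have e2: "t powr (\<nu> - 1) * t = t powr \<nu>" using elim powr_add[of t "\<nu> - 1" 1] by simp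
    have "u * t powr (-2/3) * t \<ge> - \<bar>u\<bar> * (t powr (-2/3) * t)"
      using e1 by (cases "u \<ge> 0") (auto simp: mult.assoc mult_nonneg_nonneg)
    moreover have "\<kappa> * t powr \<nu> \<le> \<bar>\<kappa>\<bar> * t powr \<nu>" by (simp add: mult_right_mono abs_ge_self)
    moreover have "t * g t > 0" using elim by simp
    moreover have "t * g t = \<eta>0 * t - \<bar>u\<bar> * (t powr (-2/3) * t) - \<bar>\<kappa>\<bar> * t powr \<nu>"
      unfolding g_def e2[symmetric] by (simp add: algebra_simps)
    ultimately have "0 \<le> (\<eta>0 + u * t powr (-2/3)) * t - \<kappa> * t powr \<nu>"
      by (simp add: algebra_simps)
    then show ?case by (simp add: ipt_def)
  qed
qed

theorem proposition2p6:
  fixes M :: "'a measure"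
    and \<omega> :: "int \<times> int \<Rightarrow> 'a \<Rightarrow> real"
    and v :: "int \<Rightarrow> real"
    and x :: "int \<Rightarrow> int"
    and \<eta>0 u \<mu> \<kappa> \<mu>0 \<nu> :: real
    and G0 G1 G2 :: "real \<Rightarrow> real"
    and D :: "real measure"
  assumes M: "prob_space M"
    and v_pos: "\<And>j. v j > 0"
    and \<omega>_indep: "prob_space.indep_vars M (\<lambda>_. borel) \<omega> UNIV"
    and \<omega>_exp: "\<And>i j. distributed M lborel (\<omega> (i, j)) (\<lambda>r. ennreal (exponential_density (v j) r))"
    and x_decr: "\<And>k. x (k + 1) < x k"
    and x0: "x 0 = 1"
    and x1: "x 1 < -1"
    and \<eta>0: "\<eta>0 > 0"
    \<comment> \<open>Assumption A1\<close>
    and G1: "cont_distr_fun G1" and G2: "cont_distr_fun G2"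
    and A1_plus: "\<And>s. ((\<lambda>t. measure M {\<xi> \<in> space M.
         (LPP (\<lambda>q. \<omega> q \<xi>) (Lplus x) {ipt ((\<eta>0 + u * t powr (-2/3)) * t) t} - ereal (\<mu> * t))
           / ereal (t powr (1/3)) \<le> ereal s}) \<longlongrightarrow> G1 s) at_top"
    and A1_minus: "\<And>s. ((\<lambda>t. measure M {\<xi> \<in> space M.
         (LPP (\<lambda>q. \<omega> q \<xi>) (Lminus x) {ipt ((\<eta>0 + u * t powr (-2/3)) * t) t} - ereal (\<mu> * t))
           / ereal (t powr (1/3)) \<le> ereal s}) \<longlongrightarrow> G2 s) at_top"
    \<comment> \<open>Assumption A2, with E+ = ipt (\<eta> t - \<kappa> t^\<nu>) (t - t^\<nu>)\<close>
    and \<nu>: "1/3 < \<nu>" "\<nu> < 1"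
    and G0: "cont_distr_fun G0"
    and A2_E: "\<And>s. ((\<lambda>t. measure M {\<xi> \<in> space M.
         (LPP (\<lambda>q. \<omega> q \<xi>) {ipt ((\<eta>0 + u * t powr (-2/3)) * t - \<kappa> * t powr \<nu>) (t - t powr \<nu>)}
                {ipt ((\<eta>0 + u * t powr (-2/3)) * t) t} - ereal (\<mu>0 * t powr \<nu>))
           / ereal (t powr (\<nu>/3)) \<le> ereal s}) \<longlongrightarrow> G0 s) at_top"
    and A2_plus: "\<And>s. ((\<lambda>t. measure M {\<xi> \<in> space M.
         (LPP (\<lambda>q. \<omega> q \<xi>) (Lplus x)
                {ipt ((\<eta>0 + u * t powr (-2/3)) * t - \<kappa> * t powr \<nu>) (t - t powr \<nu>)}
            - ereal (\<mu> * t) + ereal (\<mu>0 * t powr \<nu>))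
           / ereal (t powr (1/3)) \<le> ereal s}) \<longlongrightarrow> G1 s) at_top"
    \<comment> \<open>D a probability distribution and the hypothesis of convergence\<close>
    and D: "real_distribution D"
    and hyp: "conv_distr M (\<lambda>t \<xi>.
         (LPP (\<lambda>q. \<omega> q \<xi>) (Lminus x) {ipt ((\<eta>0 + u * t powr (-2/3)) * t) t} - ereal (\<mu> * t))
           / ereal (t powr (1/3))
       - (LPP (\<lambda>q. \<omega> q \<xi>) (Lplus x)
                {ipt ((\<eta>0 + u * t powr (-2/3)) * t - \<kappa> * t powr \<nu>) (t - t powr \<nu>)}
          + LPP (\<lambda>q. \<omega> q \<xi>) {ipt ((\<eta>0 + u * t powr (-2/3)) * t - \<kappa> * t powr \<nu>) (t - t powr \<nu>)}
                {ipt ((\<eta>0 + u * t powr (-2/3)) * t) t}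
          - ereal (\<mu> * t))
           / ereal (t powr (1/3))) D"
  shows "conv_distr M (\<lambda>t \<xi>.
         (LPP (\<lambda>q. \<omega> q \<xi>) (Lminus x) {ipt ((\<eta>0 + u * t powr (-2/3)) * t) t} - ereal (\<mu> * t))
           / ereal (t powr (1/3))
       - (LPP (\<lambda>q. \<omega> q \<xi>) (Lplus x) {ipt ((\<eta>0 + u * t powr (-2/3)) * t) t} - ereal (\<mu> * t))
           / ereal (t powr (1/3))) D"
proof -
  interpret prob_space M by (rule M)
  have m\<omega>: "\<And>q. \<omega> q \<in> borel_measurable M" using \<omega>_indep by (auto simp: indep_vars_def)
  have sup: "eventually (\<lambda>t. \<forall>\<xi>\<in>space M. \<forall>b c l.
      LPP (\<lambda>q. \<omega> q \<xi>) (Lplus x) {ipt ((\<eta>0 + u * t powr (-2/3)) * t - \<kappa> * t powr \<nu>) (t - t powr \<nu>)} = ereal b \<longrightarrow>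
      LPP (\<lambda>q. \<omega> q \<xi>) {ipt ((\<eta>0 + u * t powr (-2/3)) * t - \<kappa> * t powr \<nu>) (t - t powr \<nu>)}
                {ipt ((\<eta>0 + u * t powr (-2/3)) * t) t} = ereal c \<longrightarrow>
      LPP (\<lambda>q. \<omega> q \<xi>) (Lplus x) {ipt ((\<eta>0 + u * t powr (-2/3)) * t) t} = ereal l \<longrightarrow> b + c \<le> l) at_top"
    using E_pos[OF \<eta>0 \<nu>(2), of u \<kappa>]
  proof eventually_elim
    case (elim t)
    have SA: "\<And>z. z \<in> Lplus x \<Longrightarrow> fst z < fst (ipt ((\<eta>0 + u * t powr (-2/3)) * t - \<kappa> * t powr \<nu>) (t - t powr \<nu>))"
      using Lplus_neg[OF x_decr x1] elim by fastforce
    show ?case using LPP_superadd[OF SA] by blast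
  qed
  show ?thesis
    by (rule final[where A="\<lambda>t \<xi>. LPP (\<lambda>q. \<omega> q \<xi>) (Lminus x) {ipt ((\<eta>0 + u * t powr (-2/3)) * t) t}"
        and B="\<lambda>t \<xi>. LPP (\<lambda>q. \<omega> q \<xi>) (Lplus x) {ipt ((\<eta>0 + u * t powr (-2/3)) * t - \<kappa> * t powr \<nu>) (t - t powr \<nu>)}"
        and C="\<lambda>t \<xi>. LPP (\<lambda>q. \<omega> q \<xi>) {ipt ((\<eta>0 + u * t powr (-2/3)) * t - \<kappa> * t powr \<nu>) (t - t powr \<nu>)}
                {ipt ((\<eta>0 + u * t powr (-2/3)) * t) t}"
        and Lp="\<lambda>t \<xi>. LPP (\<lambda>q. \<omega> q \<xi>) (Lplus x) {ipt ((\<eta>0 + u * t powr (-2/3)) * t) t}",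
        OF LPP_meas[OF m\<omega>] LPP_meas[OF m\<omega>] LPP_meas[OF m\<omega>] LPP_meas[OF m\<omega>] G0 G1 G2
        A1_minus A1_plus A2_E A2_plus \<nu>(2) sup D hyp])
qed


end
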